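(* Let $k$ and $n$ be positive integers, and let $\mathcal{P}$ be a partition of $\mathbb{R}^k$ into polytopes. Then there exist a polytope $P_0\in\mathcal{P}$ and a point $\mathbf{w}=(w_1,\dots,w_n)\in(0,1)^n$ such that $w_1>w_2>\dots>w_n$ and, for every ascending $k$-tuple of indices $1\le i_1<\dots<i_k\le n$, the point $(w_{i_1},\dots,w_{i_k})$ lies in the interior of $P_0$.
   Context: A (closed, convex) polytope in $\mathbb{R}^k$ is a set of the form $\{\mathbf{x}\in\mathbb{R}^k : \mathbf{a}_j\cdot\mathbf{x}+b_j\ge 0,\ j=1,\dots,J\}$ for finitely many $\mathbf{a}_j\in\mathbb{R}^k$, $b_j\in\mathbb{R}$ (not necessarily bounded). A partition of $\mathbb{R}^k$ is a finite collection of polytopes, each with nonempty interior, whose union is $\mathbb{R}^k$ and whose interiors are pairwise disjoint. *)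

theory Defs
  imports "HOL-Analysis.Analysis"
begin

text \<open>A closed convex polytope: intersection of finitely many closed half-spaces
  given by affine inequalities a \<bullet> x + b \<ge> 0 (not necessarily bounded).\<close>
definition polytope :: "('a::euclidean_space) set \<Rightarrow> bool" where
  "polytope S \<longleftrightarrow> (\<exists>H :: ('a \<times> real) set. finite H \<and>
      S = {x. \<forall>(a, b) \<in> H. a \<bullet> x + b \<ge> 0})"

definition polytope_partition :: "('a::euclidean_space) set set \<Rightarrow> bool" where
  "polytope_partition \<P> \<longleftrightarrow> finite \<P>
     \<and> (\<forall>P \<in> \<P>. polytope P \<and> interior P \<noteq> {})
     \<and> \<Union>\<P> = UNIV
     \<and> (\<forall>P \<in> \<P>. \<forall>Q \<in> \<P>. P \<noteq> Q \<longrightarrow> interior P \<inter> interior Q = {})"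

end

theory Submission
  imports Defs
begin

definition lexG :: "real \<Rightarrow> (real ^ ('k::{finite, linorder})) set" where
  "lexG e = {x. (\<forall>j. 0 < x$j \<and> x$j \<le> e) \<and> (\<forall>i j. i < j \<longrightarrow> x$j \<le> e * x$i)}"

lemma lexG_mono:
  assumes "e \<le> e'" shows "lexG e \<subseteq> lexG e'"
proof
  fix x :: "real^'k::{finite,linorder}" assume x: "x \<in> lexG e"
  have "x$j \<le> e' * x$i" if "i < j" for i j
  proof -
    have "x$j \<le> e * x$i" using x that by (auto simp: lexG_def)
    also have "\<dots> \<le> e' * x$i" using x assms by (intro mult_right_mono) (auto simp: lexG_def less_imp_le)
    finally show ?thesis .
  qed
  moreover have "0 < x$j \<and> x$j \<le> e'" for j
  proof -
    have "0 < x$j" "x$j \<le> e" using x by (auto simp: lexG_def)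
    then show ?thesis using assms by linarith
  qed
  ultimately show "x \<in> lexG e'" by (simp add: lexG_def)
qed

lemma lexG_tuple:
  fixes s :: "'k::{finite,linorder} \<Rightarrow> nat"
  assumes "strict_mono s" "0 < e" "e < 1"
  shows "(\<chi> j. e ^ (s j + 1)) \<in> lexG e"
proof -
  have a: "0 < e ^ (s j + 1) \<and> e ^ (s j + 1) \<le> e" for j
  proof -
    have "e ^ (s j + 1) = e * e ^ s j" by simp
    also have "\<dots> \<le> e * 1" using assms by (intro mult_left_mono power_le_one) auto
    finally show ?thesis using assms by simp
  qed
  have b: "e ^ (s j + 1) \<le> e * e ^ (s i + 1)" if "i < j" for i j
  proof -
    have "s i < s j" using assms(1) that by (simp add: strict_mono_less)
    then have "e ^ (s j + 1) \<le> e ^ (s i + 2)" using assms by (intro power_decreasing) auto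
    also have "\<dots> = e * e ^ (s i + 1)" by simp
    finally show ?thesis .
  qed
  show ?thesis using a b by (simp add: lexG_def)
qed

lemma inner_bound:
  fixes a x :: "real^'k::{finite,linorder}"
  assumes "x \<in> lexG e"
  shows "\<bar>a \<bullet> x\<bar> \<le> (\<Sum>j\<in>UNIV. \<bar>a$j\<bar>) * e"
proof -
  have "\<bar>a \<bullet> x\<bar> = \<bar>\<Sum>j\<in>UNIV. a$j * x$j\<bar>" by (simp add: inner_vec_def)
  also have "\<dots> \<le> (\<Sum>j\<in>UNIV. \<bar>a$j * x$j\<bar>)" by (rule sum_abs)
  also have "\<dots> \<le> (\<Sum>j\<in>UNIV. \<bar>a$j\<bar> * e)"
  proof (intro sum_mono)
    fix j
    have "0 < x$j" "x$j \<le> e" using assms by (auto simp: lexG_def)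
    then show "\<bar>a$j * x$j\<bar> \<le> \<bar>a$j\<bar> * e" by (simp add: abs_mult mult_left_mono)
  qed
  finally show ?thesis by (simp add: sum_distrib_right)
qed

lemma key:
  fixes a :: "real^'k::{finite,linorder}" and b :: real
  assumes "(a, b) \<noteq> (0, 0)"
  shows "\<exists>e>0. e < 1 \<and> ((\<forall>x\<in>lexG e. a \<bullet> x + b > 0) \<or> (\<forall>x\<in>lexG e. a \<bullet> x + b < 0))"
proof -
  define M where "M = (\<Sum>j\<in>UNIV. \<bar>a$j\<bar>)"
  have M0: "M \<ge> 0" unfolding M_def by (intro sum_nonneg) auto
  show ?thesis
  proof (cases "b = 0")
    case False
    define e where "e = min (1/2) (\<bar>b\<bar> / (2 * (M + 1)))"
    have e0: "e > 0" using False M0 by (simp add: e_def)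
    have Me: "M * e < \<bar>b\<bar>"
    proof -
      have "M * e \<le> M * (\<bar>b\<bar> / (2 * (M + 1)))" using M0 by (intro mult_left_mono) (auto simp: e_def)
      also have "\<dots> < \<bar>b\<bar>" using M0 False by (simp add: field_simps add_nonneg_pos)
      finally show ?thesis .
    qed
    have bd: "\<bar>a \<bullet> x\<bar> < \<bar>b\<bar>" if "x \<in> lexG e" for x
      using inner_bound[OF that, of a] Me unfolding M_def by linarith
    have "(\<forall>x\<in>lexG e. a \<bullet> x + b > 0) \<or> (\<forall>x\<in>lexG e. a \<bullet> x + b < 0)"
    proof (cases "b > 0")
      case True
      have "a \<bullet> x + b > 0" if "x \<in> lexG e" for x using bd[OF that] True by (simp add: abs_less_iff)
      then show ?thesis by blast
    next
      case c: False
      have "a \<bullet> x + b < 0" if "x \<in> lexG e" for x using bd[OF that] c False by (simp add: abs_less_iff)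
      then show ?thesis by blast
    qed
    then show ?thesis using e0 by (intro exI[of _ e]) (auto simp: e_def)
  next
    case True
    then have "a \<noteq> 0" using assms by auto
    then obtain j0 where "a$j0 \<noteq> 0" by (metis vec_eq_iff zero_index)
    define m where "m = Min {j. a$j \<noteq> 0}"
    have am: "a$m \<noteq> 0" unfolding m_def using \<open>a$j0 \<noteq> 0\<close>
      by (metis (mono_tags, lifting) Min_in empty_iff finite mem_Collect_eq)
    have below: "a$j = 0" if "j < m" for j
      using that unfolding m_def by (metis (mono_tags, lifting) Min_le finite mem_Collect_eq not_le)
    define e where "e = min (1/2) (\<bar>a$m\<bar> / (2 * (M + 1)))"
    have e0: "e > 0" using am M0 by (simp add: e_def)
    have Me: "M * e < \<bar>a$m\<bar>"
    proof -
      have "M * e \<le> M * (\<bar>a$m\<bar> / (2 * (M + 1)))" using M0 by (intro mult_left_mono) (auto simp: e_def)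
      also have "\<dots> < \<bar>a$m\<bar>" using M0 am by (simp add: field_simps add_nonneg_pos)
      finally show ?thesis .
    qed
    have close: "\<bar>a \<bullet> x - a$m * x$m\<bar> < \<bar>a$m\<bar> * x$m" and xm: "x$m > 0" if x: "x \<in> lexG e" for x
    proof -
      show xm: "x$m > 0" using x by (auto simp: lexG_def)
      have "a \<bullet> x = (\<Sum>j\<in>UNIV. a$j * x$j)" by (simp add: inner_vec_def)
      also have "\<dots> = a$m * x$m + (\<Sum>j\<in>UNIV - {m}. a$j * x$j)"
        by (simp add: sum.remove)
      finally have eq: "a \<bullet> x - a$m * x$m = (\<Sum>j\<in>UNIV - {m}. a$j * x$j)" by simp
      have "\<bar>\<Sum>j\<in>UNIV - {m}. a$j * x$j\<bar> \<le> (\<Sum>j\<in>UNIV - {m}. \<bar>a$j * x$j\<bar>)" by (rule sum_abs)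
      also have "\<dots> \<le> (\<Sum>j\<in>UNIV - {m}. \<bar>a$j\<bar> * (e * x$m))"
      proof (intro sum_mono)
        fix j assume j: "j \<in> UNIV - {m}"
        show "\<bar>a$j * x$j\<bar> \<le> \<bar>a$j\<bar> * (e * x$m)"
        proof (cases "j < m")
          case True then show ?thesis using below by simp
        next
          case False
          then have "m < j" using j by auto
          then have "x$j \<le> e * x$m" "0 < x$j" using x by (auto simp: lexG_def)
          then show ?thesis by (simp add: abs_mult mult_left_mono)
        qed
      qed
      also have "\<dots> \<le> (\<Sum>j\<in>UNIV. \<bar>a$j\<bar> * (e * x$m))"
        by (intro sum_mono2) (auto simp: e0 xm less_imp_le)
      also have "\<dots> = M * e * x$m" by (simp add: M_def sum_distrib_right mult.assoc)
      also have "\<dots> < \<bar>a$m\<bar> * x$m" using Me xm by (intro mult_strict_right_mono)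
      finally show "\<bar>a \<bullet> x - a$m * x$m\<bar> < \<bar>a$m\<bar> * x$m" using eq by simp
    qed
    have "(\<forall>x\<in>lexG e. a \<bullet> x + b > 0) \<or> (\<forall>x\<in>lexG e. a \<bullet> x + b < 0)"
    proof (cases "a$m > 0")
      case True
      have "a \<bullet> x + b > 0" if "x \<in> lexG e" for x
        using close[OF that] xm[OF that] True \<open>b = 0\<close> by (auto simp: abs_if split: if_splits)
      then show ?thesis by blast
    next
      case False
      then have "a$m < 0" using am by simp
      have "a \<bullet> x + b < 0" if "x \<in> lexG e" for x
        using close[OF that] xm[OF that] \<open>a$m < 0\<close> \<open>b = 0\<close> by (auto simp: abs_if split: if_splits)
      then show ?thesis by blast
    qed
    then show ?thesis using e0 by (intro exI[of _ e]) (auto simp: e_def)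
  qed
qed

lemma rank_strict_mono: "strict_mono (\<lambda>j::'k::{finite,linorder}. card {i. i < j})"
proof (rule strict_monoI)
  fix x y :: 'k assume "x < y"
  then have "{i. i < x} \<subset> {i. i < y}" by auto
  then show "card {i. i < x} < card {i. i < y}" by (intro psubset_card_mono) auto
qed

theorem theorem3p2:
  fixes \<P> :: "(real ^ ('k::{finite, linorder})) set set" and n :: nat
  assumes "n \<ge> 1"
    and "polytope_partition \<P>"
  shows "\<exists>P0 \<in> \<P>. \<exists>w :: nat \<Rightarrow> real.
           (\<forall>i < n. 0 < w i \<and> w i < 1)
         \<and> (\<forall>i j. i < j \<and> j < n \<longrightarrow> w j < w i)
         \<and> (\<forall>s :: 'k \<Rightarrow> nat. strict_mono s \<and> (\<forall>j. s j < n)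
               \<longrightarrow> (\<chi> j. w (s j)) \<in> interior P0)"
proof -
  have fin: "finite \<P>" and pol: "\<forall>P\<in>\<P>. polytope P" and cov: "\<Union>\<P> = UNIV"
    using assms(2) by (auto simp: polytope_partition_def)
  have "\<forall>P\<in>\<P>. \<exists>H. finite H \<and> P = {x. \<forall>(a, b) \<in> H. a \<bullet> x + b \<ge> 0}"
    using pol by (auto simp: polytope_def)
  from bchoice[OF this] obtain HP where HP0: "\<forall>P\<in>\<P>. finite (HP P) \<and> P = {x. \<forall>(a, b) \<in> HP P. a \<bullet> x + b \<ge> 0}"
    by blast
  have HP: "\<And>P. P \<in> \<P> \<Longrightarrow> finite (HP P) \<and> P = {x. \<forall>(a, b) \<in> HP P. a \<bullet> x + b \<ge> 0}"
    using HP0 by blast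
  define HH where "HH = (\<Union>P\<in>\<P>. HP P) - {(0,0)}"
  have finHH: "finite HH" unfolding HH_def using fin HP by auto
  have "\<forall>h\<in>HH. \<exists>e>0. e < 1 \<and> ((\<forall>x\<in>lexG e. fst h \<bullet> x + snd h > 0) \<or> (\<forall>x\<in>lexG e. fst h \<bullet> x + snd h < 0))"
  proof
    fix h assume "h \<in> HH"
    then have "(fst h, snd h) \<noteq> (0, 0)" by (auto simp: HH_def)
    from key[OF this] show "\<exists>e>0. e < 1 \<and> ((\<forall>x\<in>lexG e. fst h \<bullet> x + snd h > 0) \<or> (\<forall>x\<in>lexG e. fst h \<bullet> x + snd h < 0))" .
  qed
  from bchoice[OF this] obtain eps where eps0: "\<forall>h\<in>HH. eps h > 0 \<and> eps h < 1 \<and> ((\<forall>x\<in>lexG (eps h). fst h \<bullet> x + snd h > 0) \<or> (\<forall>x\<in>lexG (eps h). fst h \<bullet> x + snd h < 0))"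
    by blast
  have eps: "\<And>h. h \<in> HH \<Longrightarrow> eps h > 0 \<and> ((\<forall>x\<in>lexG (eps h). fst h \<bullet> x + snd h > 0) \<or> (\<forall>x\<in>lexG (eps h). fst h \<bullet> x + snd h < 0))"
    using eps0 by blast
  define e0 where "e0 = Min (insert (1/2) (eps ` HH))"
  have e0pos: "e0 > 0" unfolding e0_def using finHH eps by (subst Min_gr_iff) auto
  have e0lt: "e0 < 1" unfolding e0_def using finHH by (subst Min_less_iff) auto
  have e0le: "e0 \<le> eps h" if "h \<in> HH" for h unfolding e0_def using finHH that by (intro Min_le) auto
  have sgn: "(\<forall>x\<in>lexG e0. fst h \<bullet> x + snd h > 0) \<or> (\<forall>x\<in>lexG e0. fst h \<bullet> x + snd h < 0)"
    if "h \<in> HH" for h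
    using eps[OF that] lexG_mono[OF e0le[OF that]] by blast
  obtain p P0 where pG: "p \<in> lexG e0" and P0: "P0 \<in> \<P>" "p \<in> P0"
    using lexG_tuple[OF rank_strict_mono e0pos e0lt] cov by blast
  have pos: "\<forall>x\<in>lexG e0. a \<bullet> x + b > 0" if "(a, b) \<in> HP P0" "(a, b) \<noteq> (0, 0)" for a b
  proof -
    have h: "(a, b) \<in> HH" using that P0 by (auto simp: HH_def)
    have "a \<bullet> p + b \<ge> 0" using P0 HP[OF P0(1)] that(1) by auto
    moreover from sgn[OF h] have "(\<forall>x\<in>lexG e0. a \<bullet> x + b > 0) \<or> (\<forall>x\<in>lexG e0. a \<bullet> x + b < 0)" by simp
    ultimately show ?thesis using pG by fastforce
  qed
  define Oset where "Oset = (\<Inter>h\<in>HP P0 - {(0,0)}. {x. 0 < fst h \<bullet> x + snd h})"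
  have openO: "open Oset" unfolding Oset_def using HP[OF P0(1)]
    by (intro open_INT) (auto intro!: open_Collect_less continuous_intros)
  have "Oset \<subseteq> P0"
  proof
    fix x assume "x \<in> Oset"
    then have xO: "\<And>h. h \<in> HP P0 \<Longrightarrow> h \<noteq> (0,0) \<Longrightarrow> 0 < fst h \<bullet> x + snd h" unfolding Oset_def by blast
    have "\<forall>(a, b) \<in> HP P0. a \<bullet> x + b \<ge> 0"
    proof (clarify)
      fix a b assume ab: "(a, b) \<in> HP P0"
      show "a \<bullet> x + b \<ge> 0"
      proof (cases "(a, b) = (0, 0)")
        case True then show ?thesis by simp
      next
        case False then show ?thesis using xO[OF ab] by simp
      qed
    qed
    then show "x \<in> P0" using HP[OF P0(1)] by blast
  qed
  then have Oint: "Oset \<subseteq> interior P0" using openO by (rule interior_maximal)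
  have GO: "lexG e0 \<subseteq> Oset"
  proof
    fix x :: "real^('k::{finite,linorder})" assume x: "x \<in> lexG e0"
    have "0 < fst h \<bullet> x + snd h" if "h \<in> HP P0 - {(0,0)}" for h
      using pos[of "fst h" "snd h"] that x by auto
    then show "x \<in> Oset" unfolding Oset_def by blast
  qed
  define w :: "nat \<Rightarrow> real" where "w i = e0 ^ (i + 1)" for i
  show ?thesis
  proof (intro bexI[OF _ P0(1)] exI[of _ w] conjI allI impI)
    fix i assume "i < n"
    show "0 < w i" using e0pos by (simp add: w_def)
    show "w i < 1" using e0pos e0lt unfolding w_def using power_Suc_less_one[of e0 i] by simp
  next
    fix i j assume "i < j \<and> j < n"
    then show "w j < w i" using e0pos e0lt unfolding w_def by (intro power_strict_decreasing) auto
  next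
    fix s :: "'k \<Rightarrow> nat" assume "strict_mono s \<and> (\<forall>j. s j < n)"
    then have "(\<chi> j. w (s j)) \<in> lexG e0" unfolding w_def using lexG_tuple e0pos e0lt by blast
    then show "(\<chi> j. w (s j)) \<in> interior P0" using GO Oint by blast
  qed
qed

end
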